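(* Let $n\ge 1$ and let $G_1,G_2$ be $(n+1)$-partite graphs whose clique complexes $X(G_1),X(G_2)$ are pure $n$-dimensional, $(n+1)$-partite and strongly gallery connected. Then $X(G_1\circledast G_2)$ is also a pure $n$-dimensional, $(n+1)$-partite, strongly gallery connected clique complex.
   Context: An $(n+1)$-partite graph is a graph $G=(V,E)$ with an ordered tuple $(V^0,\ldots,V^n)$ of pairwise disjoint independent sets with union $V$. For $(n+1)$-partite graphs $G_1=((V_1^0,\ldots,V_1^n),E_1)$, $G_2=((V_2^0,\ldots,V_2^n),E_2)$, the partite product $G_1\circledast G_2$ has ordered parts $(V_1^0\times V_2^0,\ldots,V_1^n\times V_2^n)$, and for $i\ne j$, $(a,b)\in V_1^i\times V_2^i$ and $(c,d)\in V_1^j\times V_2^j$ are adjacent iff $\{a,c\}\in E_1$ and $\{b,d\}\in E_2$ (no edges inside a part). The clique complex $X(G)$ is the simplicial complex of cliques of $G$; it is $n$-dimensional if the largest clique has $n+1$ vertices, and pure if every clique is contained in a clique of size $n+1$. The link of a clique $C$ is the clique complex of the subgraph induced on the set of vertices adjacent to all vertices of $C$. $X$ is strongly gallery connected if its 1-skeleton (the graph $G$) is connected and the 1-skeleton of every link of dimension $\ge 1$ is connected. *)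

theory Defs
  imports Main
begin

definition graph :: "'a set \<Rightarrow> ('a \<Rightarrow> 'a \<Rightarrow> bool) \<Rightarrow> bool" where
  "graph V E \<longleftrightarrow> (\<forall>u v. E u v \<longrightarrow> u \<in> V \<and> v \<in> V \<and> u \<noteq> v \<and> E v u)"

definition partite_graph ::
  "nat \<Rightarrow> 'a set \<Rightarrow> ('a \<Rightarrow> 'a \<Rightarrow> bool) \<Rightarrow> (nat \<Rightarrow> 'a set) \<Rightarrow> bool" where
  "partite_graph m V E P \<longleftrightarrow>
     graph V E \<and>
     (\<forall>i<m. \<forall>j<m. i \<noteq> j \<longrightarrow> P i \<inter> P j = {}) \<and>
     (\<forall>i<m. \<forall>u\<in>P i. \<forall>v\<in>P i. \<not> E u v) \<and>
     (\<Union>i<m. P i) = V"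

text \<open>Simplices of the clique complex X(G): finite cliques of G.\<close>
definition clique :: "'a set \<Rightarrow> ('a \<Rightarrow> 'a \<Rightarrow> bool) \<Rightarrow> 'a set \<Rightarrow> bool" where
  "clique V E C \<longleftrightarrow> finite C \<and> C \<subseteq> V \<and> (\<forall>u\<in>C. \<forall>v\<in>C. u \<noteq> v \<longrightarrow> E u v)"

definition pure_dim :: "nat \<Rightarrow> 'a set \<Rightarrow> ('a \<Rightarrow> 'a \<Rightarrow> bool) \<Rightarrow> bool" where
  "pure_dim n V E \<longleftrightarrow>
     (\<exists>C. clique V E C \<and> card C = n + 1) \<and>
     (\<forall>C. clique V E C \<longrightarrow> card C \<le> n + 1) \<and>
     (\<forall>C. clique V E C \<longrightarrow> (\<exists>D. clique V E D \<and> C \<subseteq> D \<and> card D = n + 1))"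

text \<open>Vertex set of the link of a clique C: vertices adjacent to all vertices of C.
  The link is the clique complex of the induced subgraph on this set.\<close>
definition link_vertices :: "'a set \<Rightarrow> ('a \<Rightarrow> 'a \<Rightarrow> bool) \<Rightarrow> 'a set \<Rightarrow> 'a set" where
  "link_vertices V E C = {v \<in> V. \<forall>u\<in>C. E u v}"

definition dim_ge_1 :: "'a set \<Rightarrow> ('a \<Rightarrow> 'a \<Rightarrow> bool) \<Rightarrow> bool" where
  "dim_ge_1 W E \<longleftrightarrow> (\<exists>C. clique W E C \<and> card C \<ge> 2)"

definition graph_connected :: "'a set \<Rightarrow> ('a \<Rightarrow> 'a \<Rightarrow> bool) \<Rightarrow> bool" where
  "graph_connected W E \<longleftrightarrow>
     (\<forall>u\<in>W. \<forall>v\<in>W. (\<lambda>x y. x \<in> W \<and> y \<in> W \<and> E x y)\<^sup>*\<^sup>* u v)"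

definition strongly_gallery_connected :: "'a set \<Rightarrow> ('a \<Rightarrow> 'a \<Rightarrow> bool) \<Rightarrow> bool" where
  "strongly_gallery_connected V E \<longleftrightarrow>
     graph_connected V E \<and>
     (\<forall>C. clique V E C \<and> C \<noteq> {} \<and> dim_ge_1 (link_vertices V E C) E
        \<longrightarrow> graph_connected (link_vertices V E C) E)"

definition pprod_parts :: "(nat \<Rightarrow> 'a set) \<Rightarrow> (nat \<Rightarrow> 'b set) \<Rightarrow> nat \<Rightarrow> ('a \<times> 'b) set" where
  "pprod_parts P1 P2 i = P1 i \<times> P2 i"

definition pprod_vertices :: "nat \<Rightarrow> (nat \<Rightarrow> 'a set) \<Rightarrow> (nat \<Rightarrow> 'b set) \<Rightarrow> ('a \<times> 'b) set" where
  "pprod_vertices m P1 P2 = (\<Union>i<m. P1 i \<times> P2 i)"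

definition pprod_edges ::
  "nat \<Rightarrow> (nat \<Rightarrow> 'a set) \<Rightarrow> ('a \<Rightarrow> 'a \<Rightarrow> bool) \<Rightarrow> (nat \<Rightarrow> 'b set) \<Rightarrow> ('b \<Rightarrow> 'b \<Rightarrow> bool)
     \<Rightarrow> ('a \<times> 'b) \<Rightarrow> ('a \<times> 'b) \<Rightarrow> bool" where
  "pprod_edges m P1 E1 P2 E2 x y \<longleftrightarrow>
     (\<exists>i<m. \<exists>j<m. i \<noteq> j \<and> x \<in> P1 i \<times> P2 i \<and> y \<in> P1 j \<times> P2 j \<and>
        E1 (fst x) (fst y) \<and> E2 (snd x) (snd y))"

end

theory Submission
  imports Defs
begin


lemma card_free:
  assumes "inj_on h {..n::nat}" "C \<subseteq> h ` {..n}"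
  shows "card {i. i \<le> n \<and> h i \<notin> C} + card C = n + 1"
proof -
  have "h ` {i. i \<le> n \<and> h i \<in> C} = C" using assms(2) by auto
  moreover have "inj_on h {i. i \<le> n \<and> h i \<in> C}" using assms(1) by (rule inj_on_subset) auto
  ultimately have c1: "card {i. i \<le> n \<and> h i \<in> C} = card C" using card_image by fastforce
  have u: "{..n} = {i. i \<le> n \<and> h i \<notin> C} \<union> {i. i \<le> n \<and> h i \<in> C}" by auto
  have "card {..n} = card {i. i \<le> n \<and> h i \<notin> C} + card {i. i \<le> n \<and> h i \<in> C}"
    by (subst u, rule card_Un_disjoint) auto
  then show ?thesis using c1 by simp
qed

lemma two_elems:
  assumes "2 \<le> card (S::nat set)" shows "\<exists>j\<in>S. j \<noteq> k"
proof (rule ccontr)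
  assume "\<not> ?thesis"
  then have "S \<subseteq> {k}" by auto
  then have "card S \<le> 1" using card_mono[of "{k}" S] by simp
  then show False using assms by simp
qed

lemma one_elem:
  assumes "1 \<le> card (S::nat set)" shows "\<exists>j. j\<in>S"
  using assms by (metis card.empty ex_in_conv not_one_le_zero)

locale pg =
  fixes n :: nat and V :: "'a set" and E :: "'a \<Rightarrow> 'a \<Rightarrow> bool" and P :: "nat \<Rightarrow> 'a set"
  assumes pgr: "partite_graph (n+1) V E P" and pd: "pure_dim n V E"
begin

lemma E_props: "E u v \<Longrightarrow> u \<in> V \<and> v \<in> V \<and> u \<noteq> v \<and> E v u"
  using pgr unfolding partite_graph_def graph_def by blast

lemma irr: "\<not> E u u" using E_props by blast

lemma disj: "i \<le> n \<Longrightarrow> j \<le> n \<Longrightarrow> x \<in> P i \<Longrightarrow> x \<in> P j \<Longrightarrow> i = j"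
  using pgr unfolding partite_graph_def by (auto simp: less_Suc_eq_le)

lemma indep: "i \<le> n \<Longrightarrow> u \<in> P i \<Longrightarrow> v \<in> P i \<Longrightarrow> \<not> E u v"
  using pgr unfolding partite_graph_def by (auto simp: less_Suc_eq_le)

lemma cover: "x \<in> V \<longleftrightarrow> (\<exists>i\<le>n. x \<in> P i)"
proof -
  have "(\<Union>i<n+1. P i) = V" using pgr unfolding partite_graph_def by blast
  then show ?thesis by (auto simp: less_Suc_eq_le)
qed

definition frame where
  "frame f \<longleftrightarrow> (\<forall>i\<le>n. f i \<in> P i) \<and> (\<forall>i\<le>n. \<forall>j\<le>n. i \<noteq> j \<longrightarrow> E (f i) (f j))"

lemma frame_inj: "frame f \<Longrightarrow> inj_on f {..n}"
  unfolding frame_def inj_on_def using irr by (metis atMost_iff)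

lemma frame_idx: "frame f \<Longrightarrow> i \<le> n \<Longrightarrow> x \<in> P i \<Longrightarrow> x \<in> f ` {..n} \<Longrightarrow> x = f i"
  unfolding frame_def using disj by auto

lemma frame_V: "frame f \<Longrightarrow> i \<le> n \<Longrightarrow> f i \<in> V"
  using cover unfolding frame_def by blast

lemma clique_insert:
  assumes a: "clique V E C" "v \<in> V" "\<forall>u\<in>C. E u v"
  shows "clique V E (insert v C)"
proof -
  have f: "finite (insert v C)" "insert v C \<subseteq> V" using a unfolding clique_def by auto
  have "\<forall>x\<in>insert v C. \<forall>y\<in>insert v C. x \<noteq> y \<longrightarrow> E x y"
  proof (intro ballI impI)
    fix x y assume xy: "x \<in> insert v C" "y \<in> insert v C" "x \<noteq> y"
    show "E x y"
    proof (cases "x = v")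
      case True
      then have "y \<in> C" using xy by auto
      then have "E y x" using a(3) True by blast
      then show ?thesis using E_props by blast
    next
      case False
      then have xC: "x \<in> C" using xy by auto
      show ?thesis
      proof (cases "y = v")
        case True
        then show ?thesis using a(3) xC by blast
      next
        case False
        then have "y \<in> C" using xy by auto
        then show ?thesis using a(1) xC xy(3) unfolding clique_def by blast
      qed
    qed
  qed
  then show ?thesis using f unfolding clique_def by blast
qed

lemma frame_link: "frame f \<Longrightarrow> C \<subseteq> f ` {..n} \<Longrightarrow> i \<le> n \<Longrightarrow> f i \<notin> C
   \<Longrightarrow> f i \<in> link_vertices V E C"
proof -
  assume a: "frame f" "C \<subseteq> f ` {..n}" "i \<le> n" "f i \<notin> C"
  have "\<forall>u\<in>C. E u (f i)"
  proof
    fix u assume "u \<in> C"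
    then obtain j where j: "j \<le> n" "u = f j" using a(2) by auto
    then have "j \<noteq> i" using a(4) \<open>u \<in> C\<close> by auto
    then show "E u (f i)" using a(1) a(3) j unfolding frame_def by blast
  qed
  then show ?thesis using frame_V[OF a(1) a(3)] unfolding link_vertices_def by blast
qed

definition pidx where "pidx x = (SOME i. i \<le> n \<and> x \<in> P i)"

lemma pidx: "x \<in> V \<Longrightarrow> pidx x \<le> n \<and> x \<in> P (pidx x)"
  unfolding pidx_def using cover by (metis (mono_tags, lifting) someI_ex)

lemma exists_frame: assumes "clique V E C" shows "\<exists>f. frame f \<and> C \<subseteq> f ` {..n}"
proof -
  obtain D where D: "clique V E D" "C \<subseteq> D" "card D = n+1"
    using pd assms unfolding pure_dim_def by blast
  have DV: "D \<subseteq> V" using D(1) unfolding clique_def by blast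
  have inj: "inj_on pidx D"
  proof (rule inj_onI)
    fix x y assume xy: "x \<in> D" "y \<in> D" "pidx x = pidx y"
    show "x = y"
    proof (rule ccontr)
      assume "x \<noteq> y"
      then have "E x y" using D(1) xy unfolding clique_def by blast
      moreover have "x \<in> V" "y \<in> V" using DV xy by auto
      ultimately show False using pidx indep xy(3) by metis
    qed
  qed
  have sub: "pidx ` D \<subseteq> {..n}" using pidx DV by auto
  have "card (pidx ` D) = card {..n}" using card_image[OF inj] D(3) by simp
  then have eq: "pidx ` D = {..n}" using card_subset_eq[OF _ sub] by simp
  define f where "f i = (SOME x. x \<in> D \<and> x \<in> P i)" for i
  have fi: "f i \<in> D \<and> f i \<in> P i" if "i \<le> n" for i
  proof -
    from eq that obtain x where "x \<in> D" "pidx x = i" by (metis atMost_iff imageE)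
    then have "x \<in> D \<and> x \<in> P i" using pidx DV by auto
    then show ?thesis unfolding f_def by (rule someI)
  qed
  have "frame f" unfolding frame_def
  proof (intro conjI allI impI)
    fix i assume "i \<le> n" then show "f i \<in> P i" using fi by blast
  next
    fix i j assume ij: "i \<le> n" "j \<le> n" "i \<noteq> j"
    then have "f i \<noteq> f j" using fi disj by metis
    then show "E (f i) (f j)" using fi D(1) ij unfolding clique_def by blast
  qed
  moreover have "C \<subseteq> f ` {..n}"
  proof
    fix c assume "c \<in> C"
    then have c: "c \<in> D" "c \<in> V" using D DV by auto
    have ci: "pidx c \<le> n" "c \<in> P (pidx c)" using pidx c by auto
    have "f (pidx c) = c"
    proof (rule ccontr)
      assume "f (pidx c) \<noteq> c"
      then have "E (f (pidx c)) c" using fi[OF ci(1)] c D(1) unfolding clique_def by blast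
      then show False using indep ci fi by blast
    qed
    then show "c \<in> f ` {..n}" using ci(1) by force
  qed
  ultimately show ?thesis by blast
qed

lemma frame_free: "frame f \<Longrightarrow> C \<subseteq> f ` {..n} \<Longrightarrow> card {i. i \<le> n \<and> f i \<notin> C} + card C = n + 1"
  using card_free frame_inj by blast

end

locale pgs = pg +
  assumes sgc: "strongly_gallery_connected V E"
begin

lemma link_conn:
  assumes C: "clique V E C" "card C < n"
  shows "graph_connected (link_vertices V E C) E"
proof (cases "C = {}")
  case True
  then have "link_vertices V E C = V" unfolding link_vertices_def by auto
  then show ?thesis using sgc unfolding strongly_gallery_connected_def by simp
next
  case False
  obtain f where f: "frame f" "C \<subseteq> f ` {..n}" using exists_frame C(1) by blast
  let ?S = "{i. i \<le> n \<and> f i \<notin> C}"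
  have "card ?S \<ge> 2" using frame_free[OF f] C(2) by simp
  then have "1 \<le> card ?S" by simp
  then obtain i where i: "i \<in> ?S" using one_elem by blast
  obtain j where j: "j \<in> ?S" "j \<noteq> i" using two_elems[OF \<open>card ?S \<ge> 2\<close>] by blast
  have K: "clique (link_vertices V E C) E {f i, f j}"
    unfolding clique_def using frame_link[OF f] i j f(1) unfolding frame_def by auto
  have "f i \<noteq> f j" using frame_inj[OF f(1)] i j unfolding inj_on_def by auto
  then have "card {f i, f j} = 2" by simp
  then have "dim_ge_1 (link_vertices V E C) E" using K unfolding dim_ge_1_def by (metis order_refl)
  then show ?thesis using sgc False C(1) unfolding strongly_gallery_connected_def by blast
qed

definition gstep where
  "gstep C f g \<longleftrightarrow> frame f \<and> frame g \<and> C \<subseteq> f ` {..n} \<and> C \<subseteq> g ` {..n}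
     \<and> (\<exists>k\<le>n. \<forall>i\<le>n. i \<noteq> k \<longrightarrow> f i = g i)"

lemma gstep_mono: "C \<subseteq> C' \<Longrightarrow> (gstep C')\<^sup>*\<^sup>* f g \<Longrightarrow> (gstep C)\<^sup>*\<^sup>* f g"
proof -
  assume "C \<subseteq> C'"
  then have "gstep C' \<le> gstep C" unfolding gstep_def by auto
  then show "(gstep C')\<^sup>*\<^sup>* f g \<Longrightarrow> (gstep C)\<^sup>*\<^sup>* f g"
    using rtranclp_mono by (metis predicate2D)
qed

lemma gallery:
  "clique V E C \<Longrightarrow> card C + k = n \<Longrightarrow> frame f \<Longrightarrow> frame g \<Longrightarrow> C \<subseteq> f ` {..n}
   \<Longrightarrow> C \<subseteq> g ` {..n} \<Longrightarrow> (gstep C)\<^sup>*\<^sup>* f g"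
proof (induction k arbitrary: C f g)
  case 0
  let ?S = "{i. i \<le> n \<and> f i \<notin> C}"
  have "card ?S = 1" using frame_free[of f C] 0 by simp
  then obtain k where S: "?S = {k}" by (auto simp: card_1_singleton_iff)
  have "k \<le> n" using S by auto
  have "\<forall>i\<le>n. i \<noteq> k \<longrightarrow> f i = g i"
  proof (intro allI impI)
    fix i assume i: "i \<le> n" "i \<noteq> k"
    then have "f i \<in> C" using S by blast
    then have "f i \<in> g ` {..n}" using 0 by auto
    then show "f i = g i" using frame_idx[of g i "f i"] 0 i unfolding frame_def by auto
  qed
  then have "gstep C f g" using 0 \<open>k\<le>n\<close> unfolding gstep_def by blast
  then show ?case by blast
next
  case (Suc k)
  have cn: "card C < n" using Suc by simp
  have fin: "finite C" using Suc.prems(1) unfolding clique_def by blast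
  let ?W = "link_vertices V E C"
  let ?R = "\<lambda>x y. x \<in> ?W \<and> y \<in> ?W \<and> E x y"
  have conn: "graph_connected ?W E" using link_conn Suc.prems(1) cn by blast
  have "card {i. i \<le> n \<and> f i \<notin> C} \<ge> 1" using frame_free[of f C] Suc.prems cn by simp
  then obtain i0 where i0: "i0 \<le> n" "f i0 \<notin> C" using one_elem by blast
  have "card {i. i \<le> n \<and> g i \<notin> C} \<ge> 1" using frame_free[of g C] Suc.prems cn by simp
  then obtain i1 where i1: "i1 \<le> n" "g i1 \<notin> C" using one_elem by blast
  have x: "f i0 \<in> ?W" using frame_link Suc.prems i0 by blast
  have y: "g i1 \<in> ?W" using frame_link Suc.prems i1 by blast
  have reach: "?R\<^sup>*\<^sup>* (f i0) (g i1)" using conn x y unfolding graph_connected_def by blast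
  have claim: "?R\<^sup>*\<^sup>* (f i0) v \<Longrightarrow> frame h \<Longrightarrow> insert v C \<subseteq> h ` {..n} \<Longrightarrow> (gstep C)\<^sup>*\<^sup>* f h" for v h
  proof (induction arbitrary: h rule: rtranclp_induct)
    case base
    have xV: "f i0 \<in> V" "\<forall>u\<in>C. E u (f i0)" using x unfolding link_vertices_def by auto
    have cl: "clique V E (insert (f i0) C)" using clique_insert[OF Suc.prems(1) xV] .
    have cd: "card (insert (f i0) C) + k = n" using fin i0 Suc.prems(2) by simp
    have fs: "insert (f i0) C \<subseteq> f ` {..n}" using Suc.prems(5) i0(1) by auto
    have "(gstep (insert (f i0) C))\<^sup>*\<^sup>* f h"
      using Suc.IH[OF cl cd Suc.prems(3) base.prems(1) fs base.prems(2)] .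
    then show ?case using gstep_mono[of C "insert (f i0) C"] by blast
  next
    case (step v w)
    have wV: "w \<in> V" "\<forall>u\<in>C. E u w" using step.hyps(2) unfolding link_vertices_def by auto
    have cw: "clique V E (insert w C)" using clique_insert[OF Suc.prems(1) wV] .
    have vV: "v \<in> V" and vC: "\<forall>u\<in>C. E u v" and Evw: "E v w"
      using step.hyps(2) unfolding link_vertices_def by auto
    have Ewv: "E w v" using E_props[OF Evw] by blast
    have "\<forall>u\<in>insert w C. E u v" using vC Ewv by blast
    then have cvw: "clique V E (insert v (insert w C))"
      using clique_insert[OF cw vV] by blast
    obtain h' where h': "frame h'" "insert v (insert w C) \<subseteq> h' ` {..n}"
      using exists_frame[OF cvw] by blast
    have "insert v C \<subseteq> h' ` {..n}" using h'(2) by blast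
    then have a: "(gstep C)\<^sup>*\<^sup>* f h'" using step.IH[OF h'(1)] by blast
    have wC: "w \<notin> C" using wV(2) irr by blast
    have cd: "card (insert w C) + k = n" using fin wC Suc.prems(2) by simp
    have hs: "insert w C \<subseteq> h' ` {..n}" using h'(2) by auto
    have "(gstep (insert w C))\<^sup>*\<^sup>* h' h"
      using Suc.IH[OF cw cd h'(1) step.prems(1) hs step.prems(2)] .
    then have "(gstep C)\<^sup>*\<^sup>* h' h" using gstep_mono[of C "insert w C"] by blast
    then show ?case using a by simp
  qed
  have "insert (g i1) C \<subseteq> g ` {..n}" using Suc.prems(6) i1(1) by blast
  then show ?case using claim[OF reach Suc.prems(4)] by blast
qed

end



locale GG = G1: pgs n V1 E1 P1 + G2: pgs n V2 E2 P2
  for n :: nat and V1 :: "'a set" and E1 P1 and V2 :: "'b set" and E2 P2 +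
  assumes n1: "n \<ge> 1"
begin

abbreviation "Vp \<equiv> pprod_vertices (n+1) P1 P2"
abbreviation "Ep \<equiv> pprod_edges (n+1) P1 E1 P2 E2"

lemma Vp_iff: "x \<in> Vp \<longleftrightarrow> (\<exists>i\<le>n. fst x \<in> P1 i \<and> snd x \<in> P2 i)"
  by (cases x) (auto simp: pprod_vertices_def less_Suc_eq_le)

lemma Ep_iff: "Ep x y \<longleftrightarrow> (\<exists>i\<le>n. \<exists>j\<le>n. i \<noteq> j \<and> fst x \<in> P1 i \<and> snd x \<in> P2 i
   \<and> fst y \<in> P1 j \<and> snd y \<in> P2 j \<and> E1 (fst x) (fst y) \<and> E2 (snd x) (snd y))"
  unfolding pprod_edges_def by (auto simp: less_Suc_eq_le mem_Times_iff)

lemma Ep_props: "Ep x y \<Longrightarrow> x \<in> Vp \<and> y \<in> Vp \<and> x \<noteq> y \<and> Ep y x \<and> E1 (fst x) (fst y) \<and> E2 (snd x) (snd y)"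
proof -
  assume "Ep x y"
  then obtain i j where ij: "i \<le> n" "j \<le> n" "i \<noteq> j" "fst x \<in> P1 i" "snd x \<in> P2 i"
    "fst y \<in> P1 j" "snd y \<in> P2 j" "E1 (fst x) (fst y)" "E2 (snd x) (snd y)"
    unfolding Ep_iff by blast
  have "x \<in> Vp" "y \<in> Vp" unfolding Vp_iff using ij by blast+
  moreover have "x \<noteq> y" using G1.E_props[OF ij(8)] by blast
  moreover have "Ep y x" unfolding Ep_iff using ij G1.E_props[OF ij(8)] G2.E_props[OF ij(9)] by blast
  ultimately show ?thesis using ij by blast
qed

lemma Ep_irr: "\<not> Ep x x" using Ep_props by blast

lemma partite: "partite_graph (n + 1) Vp Ep (pprod_parts P1 P2)"
  unfolding partite_graph_def
proof (intro conjI)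
  show "graph Vp Ep" unfolding graph_def using Ep_props by blast
  show "\<forall>i<n + 1. \<forall>j<n + 1. i \<noteq> j \<longrightarrow> pprod_parts P1 P2 i \<inter> pprod_parts P1 P2 j = {}"
    unfolding pprod_parts_def using G1.disj by (fastforce simp: less_Suc_eq_le)
  show "\<forall>i<n + 1. \<forall>u\<in>pprod_parts P1 P2 i. \<forall>v\<in>pprod_parts P1 P2 i. \<not> Ep u v"
  proof (intro allI impI ballI)
    fix i u v assume i: "i < n+1" and u: "u \<in> pprod_parts P1 P2 i" and v: "v \<in> pprod_parts P1 P2 i"
    show "\<not> Ep u v"
    proof
      assume "Ep u v"
      then obtain i' j' where ij: "i' \<le> n" "j' \<le> n" "i' \<noteq> j'" "fst u \<in> P1 i'" "fst v \<in> P1 j'"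
        unfolding Ep_iff by blast
      have "fst u \<in> P1 i" "fst v \<in> P1 i" using u v unfolding pprod_parts_def by auto
      then show False using G1.disj ij i by (metis less_Suc_eq_le Suc_eq_plus1)
    qed
  qed
  show "(\<Union>i<n + 1. pprod_parts P1 P2 i) = Vp"
    unfolding pprod_parts_def pprod_vertices_def by simp
qed

lemma proj_clique:
  assumes "clique Vp Ep C"
  shows "clique V1 E1 (fst ` C) \<and> inj_on fst C \<and> clique V2 E2 (snd ` C) \<and> inj_on snd C"
proof -
  have fin: "finite C" and sub: "C \<subseteq> Vp" and pw: "\<forall>u\<in>C. \<forall>v\<in>C. u \<noteq> v \<longrightarrow> Ep u v"
    using assms unfolding clique_def by auto
  have i1: "inj_on fst C"
  proof (rule inj_onI)
    fix x y assume "x \<in> C" "y \<in> C" "fst x = fst y"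
    then show "x = y" using pw Ep_props G1.irr by metis
  qed
  have i2: "inj_on snd C"
  proof (rule inj_onI)
    fix x y assume "x \<in> C" "y \<in> C" "snd x = snd y"
    then show "x = y" using pw Ep_props G2.irr by metis
  qed
  have s1: "fst ` C \<subseteq> V1"
  proof
    fix a assume "a \<in> fst ` C"
    then obtain x where "x \<in> C" "a = fst x" by auto
    then show "a \<in> V1" using sub Vp_iff G1.cover by blast
  qed
  have s2: "snd ` C \<subseteq> V2"
  proof
    fix a assume "a \<in> snd ` C"
    then obtain x where "x \<in> C" "a = snd x" by auto
    then show "a \<in> V2" using sub Vp_iff G2.cover by blast
  qed
  have p1: "\<forall>a\<in>fst ` C. \<forall>b\<in>fst ` C. a \<noteq> b \<longrightarrow> E1 a b"
  proof (intro ballI impI)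
    fix a b assume ab: "a \<in> fst ` C" "b \<in> fst ` C" "a \<noteq> b"
    then obtain x y where xy: "x \<in> C" "y \<in> C" "a = fst x" "b = fst y" by blast
    then have "x \<noteq> y" using ab(3) by blast
    then have "Ep x y" using pw xy by blast
    then show "E1 a b" using Ep_props xy by blast
  qed
  have p2: "\<forall>a\<in>snd ` C. \<forall>b\<in>snd ` C. a \<noteq> b \<longrightarrow> E2 a b"
  proof (intro ballI impI)
    fix a b assume ab: "a \<in> snd ` C" "b \<in> snd ` C" "a \<noteq> b"
    then obtain x y where xy: "x \<in> C" "y \<in> C" "a = snd x" "b = snd y" by blast
    then have "x \<noteq> y" using ab(3) by blast
    then have "Ep x y" using pw xy by blast
    then show "E2 a b" using Ep_props xy by blast
  qed
  have c1: "clique V1 E1 (fst ` C)" unfolding clique_def using fin s1 p1 by blast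
  have c2: "clique V2 E2 (snd ` C)" unfolding clique_def using fin s2 p2 by blast
  show ?thesis using c1 c2 i1 i2 by blast
qed

definition hp :: "(nat \<Rightarrow> 'a) \<Rightarrow> (nat \<Rightarrow> 'b) \<Rightarrow> nat \<Rightarrow> 'a \<times> 'b" where
  "hp f g i = (f i, g i)"

lemma hp_Ep: "G1.frame f \<Longrightarrow> G2.frame g \<Longrightarrow> i \<le> n \<Longrightarrow> j \<le> n \<Longrightarrow> i \<noteq> j \<Longrightarrow> Ep (hp f g i) (hp f g j)"
proof -
  assume a: "G1.frame f" "G2.frame g" "i \<le> n" "j \<le> n" "i \<noteq> j"
  have h: "f i \<in> P1 i" "g i \<in> P2 i" "f j \<in> P1 j" "g j \<in> P2 j" "E1 (f i) (f j)" "E2 (g i) (g j)"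
    using a unfolding G1.frame_def G2.frame_def by simp_all
  show ?thesis unfolding Ep_iff hp_def fst_conv snd_conv
    by (rule exI[of _ i], rule conjI[OF a(3)], rule exI[of _ j]) (simp add: a h)
qed

lemma hp_V: "G1.frame f \<Longrightarrow> G2.frame g \<Longrightarrow> i \<le> n \<Longrightarrow> hp f g i \<in> Vp"
  unfolding Vp_iff hp_def G1.frame_def G2.frame_def by auto

lemma hp_inj: "G1.frame f \<Longrightarrow> inj_on (hp f g) {..n}"
  using G1.frame_inj unfolding inj_on_def hp_def by auto

lemma hp_clique: "G1.frame f \<Longrightarrow> G2.frame g \<Longrightarrow> clique Vp Ep (hp f g ` {..n}) \<and> card (hp f g ` {..n}) = n + 1"
proof -
  assume a: "G1.frame f" "G2.frame g"
  have "clique Vp Ep (hp f g ` {..n})" unfolding clique_def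
  proof (intro conjI)
    show "finite (hp f g ` {..n})" by simp
    show "hp f g ` {..n} \<subseteq> Vp" using hp_V[OF a] by auto
    show "\<forall>u\<in>hp f g ` {..n}. \<forall>v\<in>hp f g ` {..n}. u \<noteq> v \<longrightarrow> Ep u v"
      using hp_Ep[OF a] by auto
  qed
  moreover have "card (hp f g ` {..n}) = n + 1" using card_image[OF hp_inj[OF a(1)]] by simp
  ultimately show ?thesis by blast
qed

lemma hp_ext:
  assumes C: "clique Vp Ep C" and a: "G1.frame f" "G2.frame g"
    and s: "fst ` C \<subseteq> f ` {..n}" "snd ` C \<subseteq> g ` {..n}"
  shows "C \<subseteq> hp f g ` {..n}"
proof
  fix c assume c: "c \<in> C"
  then have "c \<in> Vp" using C unfolding clique_def by blast
  then obtain i where i: "i \<le> n" "fst c \<in> P1 i" "snd c \<in> P2 i" unfolding Vp_iff by blast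
  have "fst c = f i" using G1.frame_idx[OF a(1) i(1,2)] s(1) c by blast
  moreover have "snd c = g i" using G2.frame_idx[OF a(2) i(1,3)] s(2) c by blast
  ultimately have "c = hp f g i" unfolding hp_def by (simp add: prod_eq_iff)
  then show "c \<in> hp f g ` {..n}" using i(1) by blast
qed

lemma hp_link:
  assumes a: "G1.frame f" "G2.frame g" and C: "C \<subseteq> hp f g ` {..n}" and i: "i \<le> n" "hp f g i \<notin> C"
  shows "hp f g i \<in> link_vertices Vp Ep C"
proof -
  have "\<forall>u\<in>C. Ep u (hp f g i)"
  proof
    fix u assume "u \<in> C"
    then obtain j where j: "j \<le> n" "u = hp f g j" using C by auto
    then have "j \<noteq> i" using i(2) \<open>u \<in> C\<close> by auto
    then show "Ep u (hp f g i)" using hp_Ep[OF a j(1) i(1)] j(2) by blast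
  qed
  then show ?thesis using hp_V[OF a i(1)] unfolding link_vertices_def by blast
qed

lemma hp_exists:
  assumes "clique Vp Ep C"
  shows "\<exists>f g. G1.frame f \<and> G2.frame g \<and> fst ` C \<subseteq> f ` {..n} \<and> snd ` C \<subseteq> g ` {..n}"
  using proj_clique[OF assms] G1.exists_frame G2.exists_frame by metis

lemma card_le: "clique Vp Ep C \<Longrightarrow> card C \<le> n + 1"
proof -
  assume a: "clique Vp Ep C"
  then have "card (fst ` C) = card C" using proj_clique card_image by blast
  moreover have "card (fst ` C) \<le> n + 1" using proj_clique[OF a] G1.pd unfolding pure_dim_def by blast
  ultimately show ?thesis by simp
qed

lemma pure: "pure_dim n Vp Ep"
  unfolding pure_dim_def
proof (intro conjI allI impI)
  have "clique Vp Ep {}" unfolding clique_def by simp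
  then obtain f g where fg: "G1.frame f" "G2.frame g" using hp_exists by blast
  show "\<exists>C. clique Vp Ep C \<and> card C = n + 1" using hp_clique[OF fg] by blast
next
  fix C assume "clique Vp Ep C" then show "card C \<le> n + 1" by (rule card_le)
next
  fix C assume C: "clique Vp Ep C"
  then obtain f g where fg: "G1.frame f" "G2.frame g" "fst ` C \<subseteq> f ` {..n}" "snd ` C \<subseteq> g ` {..n}"
    using hp_exists[OF C] by blast
  have d1: "clique Vp Ep (hp f g ` {..n})" "card (hp f g ` {..n}) = n + 1"
    using hp_clique[OF fg(1,2)] by auto
  have d2: "C \<subseteq> hp f g ` {..n}" using hp_ext[OF C fg] .
  show "\<exists>D. clique Vp Ep D \<and> C \<subseteq> D \<and> card D = n + 1"
    using d1 d2 by blast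
qed

end



context GG
begin

lemma clique_insert_p:
  assumes a: "clique Vp Ep C" "v \<in> Vp" "\<forall>u\<in>C. Ep u v"
  shows "clique Vp Ep (insert v C)"
proof -
  have f: "finite (insert v C)" "insert v C \<subseteq> Vp" using a unfolding clique_def by auto
  have "\<forall>x\<in>insert v C. \<forall>y\<in>insert v C. x \<noteq> y \<longrightarrow> Ep x y"
  proof (intro ballI impI)
    fix x y assume xy: "x \<in> insert v C" "y \<in> insert v C" "x \<noteq> y"
    show "Ep x y"
    proof (cases "x = v")
      case True
      then have "y \<in> C" using xy by auto
      then have "Ep y x" using a(3) True by blast
      then show ?thesis using Ep_props by blast
    next
      case False
      then have xC: "x \<in> C" using xy by auto
      show ?thesis
      proof (cases "y = v")
        case True
        then show ?thesis using a(3) xC by blast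
      next
        case False
        then have "y \<in> C" using xy by auto
        then show ?thesis using a(1) xC xy(3) unfolding clique_def by blast
      qed
    qed
  qed
  then show ?thesis using f unfolding clique_def by blast
qed

lemma conn:
  assumes C: "clique Vp Ep C" "card C < n"
    and x: "x \<in> link_vertices Vp Ep C" and y: "y \<in> link_vertices Vp Ep C"
  shows "(\<lambda>a b. a \<in> link_vertices Vp Ep C \<and> b \<in> link_vertices Vp Ep C \<and> Ep a b)\<^sup>*\<^sup>* x y"
proof -
  define W where "W = link_vertices Vp Ep C"
  define R where "R = (\<lambda>a b. a \<in> W \<and> b \<in> W \<and> Ep a b)"
  have xl: "x \<in> Vp" "\<forall>u\<in>C. Ep u x" using x unfolding link_vertices_def by auto
  have yl: "y \<in> Vp" "\<forall>u\<in>C. Ep u y" using y unfolding link_vertices_def by auto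
  have cx: "clique Vp Ep (insert x C)" using clique_insert_p[OF C(1) xl] .
  have cy: "clique Vp Ep (insert y C)" using clique_insert_p[OF C(1) yl] .
  obtain f g where fg: "G1.frame f" "G2.frame g" "fst ` insert x C \<subseteq> f ` {..n}"
      "snd ` insert x C \<subseteq> g ` {..n}"
    using hp_exists[OF cx] by blast
  have "insert x C \<subseteq> hp f g ` {..n}" using hp_ext[OF cx fg] .
  then obtain k where k: "k \<le> n" "x = hp f g k" by auto
  obtain f' g' where fg': "G1.frame f'" "G2.frame g'" "fst ` insert y C \<subseteq> f' ` {..n}"
      "snd ` insert y C \<subseteq> g' ` {..n}"
    using hp_exists[OF cy] by blast
  have "insert y C \<subseteq> hp f' g' ` {..n}" using hp_ext[OF cy fg'] .
  then obtain k' where k': "k' \<le> n" "y = hp f' g' k'" by auto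
  have pc: "clique V1 E1 (fst ` C)" "inj_on fst C" "clique V2 E2 (snd ` C)" "inj_on snd C"
    using proj_clique[OF C(1)] by auto
  have cd1: "card (fst ` C) + (n - card C) = n" using card_image[OF pc(2)] C(2) by simp
  have cd2: "card (snd ` C) + (n - card C) = n" using card_image[OF pc(4)] C(2) by simp
  have fC: "fst ` C \<subseteq> f ` {..n}" "snd ` C \<subseteq> g ` {..n}"
    "fst ` C \<subseteq> f' ` {..n}" "snd ` C \<subseteq> g' ` {..n}" using fg fg' by auto
  have gal1: "(G1.gstep (fst ` C))\<^sup>*\<^sup>* f f'"
    using G1.gallery[OF pc(1) cd1 fg(1) fg'(1) fC(1) fC(3)] .
  have gal2: "(G2.gstep (snd ` C))\<^sup>*\<^sup>* g g'"
    using G2.gallery[OF pc(3) cd2 fg(2) fg'(2) fC(2) fC(4)] .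
  define Q where "Q f g \<longleftrightarrow> G1.frame f \<and> G2.frame g \<and> fst ` C \<subseteq> f ` {..n} \<and> snd ` C \<subseteq> g ` {..n}
     \<and> (\<forall>i\<le>n. hp f g i \<notin> C \<longrightarrow> R\<^sup>*\<^sup>* x (hp f g i))" for f g
  have free2: "2 \<le> card {i. i \<le> n \<and> hp f g i \<notin> C}"
    if "G1.frame f" "G2.frame g" "fst ` C \<subseteq> f ` {..n}" "snd ` C \<subseteq> g ` {..n}" for f g
    using card_free[OF hp_inj[OF that(1)] hp_ext[OF C(1) that]] C(2) by simp
  have step_ok: "R\<^sup>*\<^sup>* x (hp f2 g2 i)"
    if q: "G1.frame f2" "G2.frame g2" "fst ` C \<subseteq> f2 ` {..n}" "snd ` C \<subseteq> g2 ` {..n}"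
      and j: "j \<le> n" "hp f2 g2 j \<notin> C" "R\<^sup>*\<^sup>* x (hp f2 g2 j)"
      and i: "i \<le> n" "hp f2 g2 i \<notin> C" for f2 g2 i j
  proof (cases "i = j")
    case True then show ?thesis using j by simp
  next
    case False
    have Cs: "C \<subseteq> hp f2 g2 ` {..n}" using hp_ext[OF C(1) q] .
    have "R (hp f2 g2 j) (hp f2 g2 i)" unfolding R_def W_def
      using hp_link[OF q(1,2) Cs j(1,2)] hp_link[OF q(1,2) Cs i] hp_Ep[OF q(1,2) j(1) i(1)] False
      by simp
    then show ?thesis by (rule rtranclp.rtrancl_into_rtrancl[OF j(3)])
  qed
  have prop1: "Q f2 g1" if q: "Q f1 g1" and st: "G1.gstep (fst ` C) f1 f2" for f1 f2 g1
  proof -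
    from st obtain kk where fr: "G1.frame f2" "fst ` C \<subseteq> f2 ` {..n}"
      and kk: "kk \<le> n" "\<forall>i\<le>n. i \<noteq> kk \<longrightarrow> f1 i = f2 i"
      unfolding G1.gstep_def by blast
    have q': "G1.frame f1" "G2.frame g1" "fst ` C \<subseteq> f1 ` {..n}" "snd ` C \<subseteq> g1 ` {..n}"
      "\<forall>i\<le>n. hp f1 g1 i \<notin> C \<longrightarrow> R\<^sup>*\<^sup>* x (hp f1 g1 i)" using q unfolding Q_def by auto
    obtain j where j: "j \<in> {i. i \<le> n \<and> hp f1 g1 i \<notin> C}" "j \<noteq> kk"
      using two_elems[OF free2[OF q'(1-4)]] by blast
    have hj: "hp f2 g1 j = hp f1 g1 j" using kk j unfolding hp_def by auto
    have j2: "j \<le> n" "hp f2 g1 j \<notin> C" using j hj by auto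
    have rj: "R\<^sup>*\<^sup>* x (hp f2 g1 j)" using q'(5) j hj by auto
    have "\<forall>i\<le>n. hp f2 g1 i \<notin> C \<longrightarrow> R\<^sup>*\<^sup>* x (hp f2 g1 i)"
      using step_ok[OF fr(1) q'(2) fr(2) q'(4) j2 rj] by blast
    then show "Q f2 g1" unfolding Q_def using fr q' by blast
  qed
  have prop2: "Q f1 g2" if q: "Q f1 g1" and st: "G2.gstep (snd ` C) g1 g2" for f1 g1 g2
  proof -
    from st obtain kk where fr: "G2.frame g2" "snd ` C \<subseteq> g2 ` {..n}"
      and kk: "kk \<le> n" "\<forall>i\<le>n. i \<noteq> kk \<longrightarrow> g1 i = g2 i"
      unfolding G2.gstep_def by blast
    have q': "G1.frame f1" "G2.frame g1" "fst ` C \<subseteq> f1 ` {..n}" "snd ` C \<subseteq> g1 ` {..n}"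
      "\<forall>i\<le>n. hp f1 g1 i \<notin> C \<longrightarrow> R\<^sup>*\<^sup>* x (hp f1 g1 i)" using q unfolding Q_def by auto
    obtain j where j: "j \<in> {i. i \<le> n \<and> hp f1 g1 i \<notin> C}" "j \<noteq> kk"
      using two_elems[OF free2[OF q'(1-4)]] by blast
    have hj: "hp f1 g2 j = hp f1 g1 j" using kk j unfolding hp_def by auto
    have j2: "j \<le> n" "hp f1 g2 j \<notin> C" using j hj by auto
    have rj: "R\<^sup>*\<^sup>* x (hp f1 g2 j)" using q'(5) j hj by auto
    have "\<forall>i\<le>n. hp f1 g2 i \<notin> C \<longrightarrow> R\<^sup>*\<^sup>* x (hp f1 g2 i)"
      using step_ok[OF q'(1) fr(1) q'(3) fr(2) j2 rj] by blast
    then show "Q f1 g2" unfolding Q_def using fr q' by blast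
  qed
  have Cs0: "C \<subseteq> hp f g ` {..n}" using hp_ext[OF C(1) fg(1,2) fC(1,2)] .
  have init: "Q f g" unfolding Q_def
  proof (intro conjI fg(1,2) fC(1,2) allI impI)
    fix i assume i: "i \<le> n" "hp f g i \<notin> C"
    show "R\<^sup>*\<^sup>* x (hp f g i)"
    proof (cases "i = k")
      case True then show ?thesis using k by simp
    next
      case False
      have "R x (hp f g i)" unfolding R_def W_def
        using x hp_link[OF fg(1,2) Cs0 i] hp_Ep[OF fg(1,2) k(1) i(1)] False k(2) by simp
      then show ?thesis by blast
    qed
  qed
  have A: "Q f'' g" if "(G1.gstep (fst ` C))\<^sup>*\<^sup>* f f''" for f''
    using that
  proof (induction rule: rtranclp_induct)
    case base then show ?case using init .
  next
    case (step a b) then show ?case using prop1 by blast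
  qed
  have B: "Q f' g''" if "(G2.gstep (snd ` C))\<^sup>*\<^sup>* g g''" for g''
    using that
  proof (induction rule: rtranclp_induct)
    case base then show ?case using A[OF gal1] .
  next
    case (step a b) then show ?case using prop2 by blast
  qed
  have Qf: "Q f' g'" using B[OF gal2] .
  have yC: "y \<notin> C" using yl(2) Ep_irr by blast
  have "R\<^sup>*\<^sup>* x y" using Qf k' yC unfolding Q_def by blast
  then show ?thesis unfolding R_def W_def .
qed

lemma sgc_prod: "strongly_gallery_connected Vp Ep"
  unfolding strongly_gallery_connected_def
proof (intro conjI allI impI)
  have l0: "link_vertices Vp Ep {} = Vp" unfolding link_vertices_def by auto
  have c0: "clique Vp Ep {}" unfolding clique_def by simp
  have "card ({} :: ('a \<times> 'b) set) < n" using n1 by simp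
  then show "graph_connected Vp Ep"
    using conn[OF c0] unfolding graph_connected_def l0 by blast
next
  fix C assume a: "clique Vp Ep C \<and> C \<noteq> {} \<and> dim_ge_1 (link_vertices Vp Ep C) Ep"
  then obtain K where K: "clique (link_vertices Vp Ep C) Ep K" "card K \<ge> 2"
    unfolding dim_ge_1_def by blast
  have C: "clique Vp Ep C" using a by blast
  have KL: "K \<subseteq> link_vertices Vp Ep C" using K(1) unfolding clique_def by blast
  have KV: "K \<subseteq> Vp" using KL unfolding link_vertices_def by auto
  have finK: "finite K" and finC: "finite C" using K(1) C unfolding clique_def by auto
  have disj: "C \<inter> K = {}"
  proof (rule ccontr)
    assume "C \<inter> K \<noteq> {}"
    then obtain v where "v \<in> C" "v \<in> K" by blast
    then have "Ep v v" using KL unfolding link_vertices_def by blast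
    then show False using Ep_irr by blast
  qed
  have pw: "\<forall>u\<in>C \<union> K. \<forall>v\<in>C \<union> K. u \<noteq> v \<longrightarrow> Ep u v"
  proof (intro ballI impI)
    fix u v assume uv: "u \<in> C \<union> K" "v \<in> C \<union> K" "u \<noteq> v"
    show "Ep u v"
    proof (cases "u \<in> C")
      case True
      show ?thesis
      proof (cases "v \<in> C")
        case True then show ?thesis using \<open>u \<in> C\<close> uv(3) C unfolding clique_def by blast
      next
        case False then have "v \<in> K" using uv by blast
        then show ?thesis using KL \<open>u \<in> C\<close> unfolding link_vertices_def by blast
      qed
    next
      case False
      then have uK: "u \<in> K" using uv by blast
      show ?thesis
      proof (cases "v \<in> C")
        case True
        then have "Ep v u" using KL uK unfolding link_vertices_def by blast
        then show ?thesis using Ep_props by blast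
      next
        case False then have "v \<in> K" using uv by blast
        then show ?thesis using uK uv(3) K(1) unfolding clique_def by blast
      qed
    qed
  qed
  have "clique Vp Ep (C \<union> K)" unfolding clique_def
    using finK finC KV C pw unfolding clique_def by blast
  then have "card (C \<union> K) \<le> n + 1" by (rule card_le)
  moreover have "card (C \<union> K) = card C + card K" using card_Un_disjoint[OF finC finK disj] .
  ultimately have "card C < n" using K(2) by simp
  then show "graph_connected (link_vertices Vp Ep C) Ep"
    using conn[OF C] unfolding graph_connected_def by blast
qed

end

theorem claim2p1:
  fixes n :: nat
    and V1 :: "'a set" and E1 :: "'a \<Rightarrow> 'a \<Rightarrow> bool" and P1 :: "nat \<Rightarrow> 'a set"
    and V2 :: "'b set" and E2 :: "'b \<Rightarrow> 'b \<Rightarrow> bool" and P2 :: "nat \<Rightarrow> 'b set"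
  assumes "n \<ge> 1"
    and "partite_graph (n + 1) V1 E1 P1"
    and "partite_graph (n + 1) V2 E2 P2"
    and "pure_dim n V1 E1"
    and "pure_dim n V2 E2"
    and "strongly_gallery_connected V1 E1"
    and "strongly_gallery_connected V2 E2"
  shows "partite_graph (n + 1) (pprod_vertices (n + 1) P1 P2)
           (pprod_edges (n + 1) P1 E1 P2 E2) (pprod_parts P1 P2)
       \<and> pure_dim n (pprod_vertices (n + 1) P1 P2) (pprod_edges (n + 1) P1 E1 P2 E2)
       \<and> strongly_gallery_connected (pprod_vertices (n + 1) P1 P2)
           (pprod_edges (n + 1) P1 E1 P2 E2)"
proof -
  interpret GG n V1 E1 P1 V2 E2 P2
    by unfold_locales (use assms in auto)
  show ?thesis using partite pure sgc_prod by blast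
qed

end
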